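(* Let $t\ge 0$ and $p_0\in\operatorname{dom}V$. Then the direction $d(p_0;t,b)$ is the unique solution of the cone projection problem \[ \min_{d\in\mathbb{R}^m}\|d+(b+tp_0)\|_2^2\quad\text{subject to}\quad D_{\mathcal E(p_0)}(p_0)A_{\mathcal E(p_0)}^\top d\ge 0 . \] Moreover, if $\hat u\in\mathbb{R}^n$ is a solution of the nonnegative least-squares problem \[ \min_{u\in\mathbb{R}^n}\|A D(p_0)u-(b+tp_0)\|_2^2\quad\text{subject to}\quad u_{\mathcal E(p_0)}\ge 0,\ u_{\mathcal E^{\mathsf C}(p_0)}=0, \] then $d(p_0;t,b)=A_{\mathcal E(p_0)}D_{\mathcal E(p_0)}(p_0)\hat u_{\mathcal E(p_0)}-(b+tp_0)$, and \[ \hat u_j\,[D(p_0)A^\top d(p_0;t,b)]_j=0\ \text{ for every } j\in\{1,\dots,n\},\qquad \|d(p_0;t,b)\|_2^2+\langle b+tp_0,d(p_0;t,b)\rangle=0 . \]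
   Context: Standing setting: $m\le n$ are positive integers, $A\in\mathbb{R}^{m\times n}$ has rank $m$, and $b\in\mathbb{R}^m\setminus\{0\}$; $e_j$ is the $j$-th standard basis vector of $\mathbb{R}^n$. For $t\ge0$ define $V(p;t,b)=\frac t2\|p\|_2^2+\langle p,b\rangle+\chi(-A^\top p)$, where $\chi(s)=0$ if $\|s\|_\infty\le 1$ and $\chi(s)=+\infty$ otherwise; $\operatorname{dom}V=\{p\in\mathbb{R}^m:\|A^\top p\|_\infty\le 1\}$. For $p\in\mathbb{R}^m$, the equicorrelation set is $\mathcal E(p)=\{j:|\langle A^\top p,e_j\rangle|=1\}$, $\mathcal E^{\mathsf C}(p)$ is its complement in $\{1,\dots,n\}$, and $D(p)=\operatorname{diag}(\operatorname{sgn}(-A^\top p))$ (with $\operatorname{sgn}(0)=0$). For an index set $\mathcal E$, $A_{\mathcal E}$ is the submatrix of $A$ with columns indexed by $\mathcal E$, $D_{\mathcal E}(p)$ is the principal submatrix of $D(p)$ with rows and columns indexed by $\mathcal E$, and $u_{\mathcal E}$ is the subvector of $u$ indexed by $\mathcal E$; vector inequalities are componentwise. For $p\in\operatorname{dom}V$, the subdifferential of $V(\cdot;t,b)$ at $p$ is the nonempty closed convex set $\partial_pV(p;t,b)=\{tp+b-\sum_{j\in\mathcal E(p)}u_jAD(p)e_j:\ u_j\ge0\}$, and $d(p;t,b):=-\operatorname{proj}_{\partial_pV(p;t,b)}(0)$, i.e. minus the element of $\partial_pV(p;t,b)$ of smallest Euclidean norm. *)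

theory Defs
  imports "HOL-Analysis.Analysis"
begin

definition indic_inf :: "real^'n \<Rightarrow> ereal" where
  "indic_inf s = (if (\<forall>j. \<bar>s$j\<bar> \<le> 1) then 0 else \<infinity>)"

definition Vfun :: "real^'n^'m \<Rightarrow> real^'m \<Rightarrow> real \<Rightarrow> real^'m \<Rightarrow> ereal" where
  "Vfun A p t b = ereal (t/2 * (norm p)^2 + inner p b) + indic_inf (- (transpose A *v p))"

definition domV :: "real^'n^'m \<Rightarrow> (real^'m) set" where
  "domV A = {p. \<forall>j. \<bar>(transpose A *v p)$j\<bar> \<le> 1}"

definition equicorr :: "real^'n^'m \<Rightarrow> real^'m \<Rightarrow> 'n set" where
  "equicorr A p = {j. \<bar>(transpose A *v p)$j\<bar> = 1}"

definition Dmat :: "real^'n^'m \<Rightarrow> real^'m \<Rightarrow> real^'n^'n" where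
  "Dmat A p = (\<chi> i j. if i = j then sgn (- (transpose A *v p)$i) else 0)"

definition subdiffV :: "real^'n^'m \<Rightarrow> real^'m \<Rightarrow> real \<Rightarrow> real^'m \<Rightarrow> (real^'m) set" where
  "subdiffV A p t b = {t *\<^sub>R p + b - (\<Sum>j\<in>equicorr A p. u j *\<^sub>R (A *v (Dmat A p *v axis j 1))) | u.
       \<forall>j\<in>equicorr A p. u j \<ge> 0}"

definition dir :: "real^'n^'m \<Rightarrow> real^'m \<Rightarrow> real \<Rightarrow> real^'m \<Rightarrow> real^'m" where
  "dir A p t b = - closest_point (subdiffV A p t b) 0"

end

theory Submission imports Defs begin

lemma Dv: "(Dmat A p *v v)$i = sgn (- (transpose A *v p)$i) * v$i"
proof -
  have "(Dmat A p *v v)$i = (\<Sum>j\<in>UNIV. Dmat A p $i$j * v$j)"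
    by (simp add: matrix_vector_mult_def)
  also have "\<dots> = (\<Sum>j\<in>UNIV. (if i = j then sgn (- (transpose A *v p)$i) * v$j else 0))"
    by (intro sum.cong) (auto simp: Dmat_def)
  also have "\<dots> = sgn (- (transpose A *v p)$i) * v$i" by simp
  finally show ?thesis .
qed

lemma Aaxis: "(A::real^'n^'m) *v axis j s = s *\<^sub>R column j A"
proof -
  have "(A *v axis j s)$k = (\<Sum>i\<in>UNIV. (if i = j then A$k$j * s else 0))" for k
    unfolding matrix_vector_mult_def axis_def vec_lambda_beta by (intro sum.cong) auto
  then show ?thesis by (simp add: vec_eq_iff column_def mult.commute)
qed

lemma Acol: "(A::real^'n^'m) *v x = (\<Sum>j\<in>UNIV. x$j *\<^sub>R column j A)"
  by (simp add: matrix_mult_sum scalar_mult_eq_scaleR)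

lemma Djj: "Dmat A p $ j $ j = sgn (- (transpose A *v p)$j)"
  by (simp add: Dmat_def)

lemma aj: "A *v (Dmat A p *v axis j 1) = sgn (- (transpose A *v p)$j) *\<^sub>R column j A"
proof -
  have "Dmat A p *v axis j 1 = axis j (sgn (- (transpose A *v p)$j))"
    by (simp add: vec_eq_iff Dv axis_def)
  then show ?thesis
    by (simp only: Aaxis)
qed

lemma I3:
  assumes "\<forall>j. j \<notin> E \<longrightarrow> v$j = 0"
  shows "A *v (Dmat A p *v v) = (\<Sum>j\<in>E. (Dmat A p $ j $ j * v$j) *\<^sub>R column j A)"
proof -
  have "A *v (Dmat A p *v v) = (\<Sum>j\<in>UNIV. (Dmat A p $ j $ j * v$j) *\<^sub>R column j A)"
    unfolding Acol[of A "Dmat A p *v v"] Dv Djj ..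
  also have "\<dots> = (\<Sum>j\<in>E. (Dmat A p $ j $ j * v$j) *\<^sub>R column j A)"
    by (rule sum.mono_neutral_right) (use assms in auto)
  finally show ?thesis .
qed

lemma I3':
  "(\<Sum>j\<in>E. (Dmat A p $ j $ j * v$j) *\<^sub>R column j A) = (\<Sum>j\<in>E. v$j *\<^sub>R (A *v (Dmat A p *v axis j 1)))"
  by (simp only: aj Djj scaleR_scaleR mult.commute)

lemma constr: "(Dmat A p *v (transpose A *v d))$j = inner (A *v (Dmat A p *v axis j 1)) d"
  unfolding aj Dv
  by (simp add: inner_vec_def column_def matrix_vector_mult_def transpose_def sum_distrib_left sum_distrib_right sum_negf ac_simps)


lemma sum_in_cone:
  assumes "finite F" "convex_cone S" "\<forall>j\<in>F. f j \<in> S"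
  shows "sum f F \<in> S"
  using assms by (induction F rule: finite_induct) (auto intro: convex_cone_add convex_cone_contains_0)

theorem lemma3p3:
  fixes A :: "real^'n^'m" and b p0 :: "real^'m" and t :: real
  assumes "CARD('m) \<le> CARD('n)"
    and "rank A = CARD('m)"
    and "b \<noteq> 0"
    and "t \<ge> 0"
    and "p0 \<in> domV A"
  shows
    "(\<forall>d. ((\<forall>j\<in>equicorr A p0. (Dmat A p0 *v (transpose A *v d))$j \<ge> 0)
            \<and> (\<forall>d'. (\<forall>j\<in>equicorr A p0. (Dmat A p0 *v (transpose A *v d'))$j \<ge> 0) \<longrightarrow>
                   (norm (d + (b + t *\<^sub>R p0)))^2 \<le> (norm (d' + (b + t *\<^sub>R p0)))^2))
          \<longleftrightarrow> d = dir A p0 t b)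
     \<and> (\<forall>u. ((\<forall>j\<in>equicorr A p0. u$j \<ge> 0) \<and> (\<forall>j. j \<notin> equicorr A p0 \<longrightarrow> u$j = 0)
             \<and> (\<forall>v. (\<forall>j\<in>equicorr A p0. v$j \<ge> 0) \<and> (\<forall>j. j \<notin> equicorr A p0 \<longrightarrow> v$j = 0) \<longrightarrow>
                 (norm (A *v (Dmat A p0 *v u) - (b + t *\<^sub>R p0)))^2
                   \<le> (norm (A *v (Dmat A p0 *v v) - (b + t *\<^sub>R p0)))^2))
          \<longrightarrow> dir A p0 t b = (\<Sum>j\<in>equicorr A p0. (Dmat A p0 $ j $ j * u$j) *\<^sub>R column j A) - (b + t *\<^sub>R p0)
              \<and> (\<forall>j. u$j * (Dmat A p0 *v (transpose A *v dir A p0 t b))$j = 0)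
              \<and> (norm (dir A p0 t b))^2 + inner (b + t *\<^sub>R p0) (dir A p0 t b) = 0)"
proof -
  define E where "E = equicorr A p0"
  define a where "a j = A *v (Dmat A p0 *v axis j 1)" for j
  define c where "c = b + t *\<^sub>R p0"
  define KU where "KU = {(\<Sum>j\<in>E. u j *\<^sub>R a j) | u. \<forall>j\<in>E. u j \<ge> 0}"
  define H where "H = convex_cone hull (a ` E)"
  have finE: "finite E" by simp
  have ccH: "convex_cone H" unfolding H_def by (rule convex_cone_convex_cone_hull)
  have aH: "a j \<in> H" if "j \<in> E" for j
    unfolding H_def using that by (intro hull_inc) auto
  have KU_H: "KU = H"
  proof
    show "KU \<subseteq> H"
    proof
      fix x assume "x \<in> KU"
      then obtain u where x: "x = (\<Sum>j\<in>E. u j *\<^sub>R a j)" and u: "\<forall>j\<in>E. u j \<ge> 0"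
        unfolding KU_def by blast
      show "x \<in> H" unfolding x
        by (rule sum_in_cone[OF finE ccH]) (use u aH convex_cone_scaleR[OF ccH] in auto)
    qed
    have "convex_cone KU"
      unfolding convex_cone_iff
    proof (intro conjI ballI allI impI)
      show "0 \<in> KU" unfolding KU_def by (rule CollectI, rule exI[of _ "\<lambda>j. 0"]) auto
    next
      fix x y assume "x \<in> KU" "y \<in> KU"
      then obtain u v where "x = (\<Sum>j\<in>E. u j *\<^sub>R a j)" "\<forall>j\<in>E. u j \<ge> 0"
        "y = (\<Sum>j\<in>E. v j *\<^sub>R a j)" "\<forall>j\<in>E. v j \<ge> 0"
        unfolding KU_def by blast
      then show "x + y \<in> KU" unfolding KU_def
        by (intro CollectI exI[of _ "\<lambda>j. u j + v j"]) (auto simp: sum.distrib scaleR_add_left)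
    next
      fix x and r :: real assume "x \<in> KU" "0 \<le> r"
      then obtain u where "x = (\<Sum>j\<in>E. u j *\<^sub>R a j)" "\<forall>j\<in>E. u j \<ge> 0"
        unfolding KU_def by blast
      then show "r *\<^sub>R x \<in> KU" unfolding KU_def using \<open>0 \<le> r\<close>
        by (intro CollectI exI[of _ "\<lambda>j. r * u j"]) (auto simp: scaleR_sum_right)
    qed
    moreover have "a ` E \<subseteq> KU"
    proof
      fix x assume "x \<in> a ` E"
      then obtain i where i: "i \<in> E" "x = a i" by blast
      have "(\<Sum>j\<in>E. (if j = i then 1 else 0) *\<^sub>R a j) = (\<Sum>j\<in>E. (if j = i then a i else 0))"
        by (intro sum.cong) auto
      also have "\<dots> = a i" using i finE by simp
      finally show "x \<in> KU" unfolding KU_def using i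
        by (intro CollectI exI[of _ "\<lambda>j. if j = i then 1 else 0"]) auto
    qed
    ultimately show "H \<subseteq> KU" unfolding H_def by (rule hull_minimal[rotated])
  qed
  define S where "S = subdiffV A p0 t b"
  have S_eq: "S = (\<lambda>k. c - k) ` H"
    unfolding S_def subdiffV_def KU_H[symmetric] KU_def c_def a_def E_def
    by (auto simp: algebra_simps)
  have img: "(\<lambda>k. c - k) ` H = (+) c ` ((\<lambda>x. - x) ` H)"
    by (auto simp: image_image)
  have clH: "closed H" unfolding H_def by (rule closed_convex_cone_hull) simp
  have clS: "closed S" unfolding S_eq img by (intro closed_translation closed_negations clH)
  have cvS: "convex S" unfolding S_eq img
    by (intro convex_translation convex_negations convex_convex_cone_hull[of "a ` E", folded H_def])
  have neS: "S \<noteq> {}" unfolding S_eq using convex_cone_contains_0[OF ccH] by auto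
  define s where "s = closest_point S 0"
  have sS: "s \<in> S" unfolding s_def by (rule closest_point_in_set[OF clS neS])
  then obtain k where kH: "k \<in> H" and sk: "s = c - k" unfolding S_eq by blast
  have dir_eq: "dir A p0 t b = k - c" unfolding dir_def S_def[symmetric] s_def[symmetric] sk by simp
  have var: "inner s k' \<le> inner s k" if "k' \<in> H" for k'
  proof -
    have "c - k' \<in> S" unfolding S_eq using that by blast
    from closest_point_dot[OF cvS clS this, of 0]
    show ?thesis unfolding s_def[symmetric] sk by (simp add: inner_diff_right inner_diff_left)
  qed
  have "inner s k \<ge> 0" using var[of 0] convex_cone_contains_0[OF ccH] by simp
  moreover have "inner s (2 *\<^sub>R k) \<le> inner s k" using var[OF convex_cone_scaleR[OF ccH, of 2 k]] kH by simp
  ultimately have sk0: "inner s k = 0" by simp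
  have sH: "inner s k' \<le> 0" if "k' \<in> H" for k' using var[OF that] sk0 by simp
  define dd where "dd = dir A p0 t b"
  have dd_s: "dd = - s" unfolding dd_def dir_eq sk by simp
  have ddk: "inner dd k = 0" using sk0 dd_s by simp
  have ddc: "dd + c = k" unfolding dd_def dir_eq by simp
  have constrE: "(\<forall>j\<in>E. (Dmat A p0 *v (transpose A *v d))$j \<ge> 0) \<longleftrightarrow> (\<forall>j\<in>E. inner (a j) d \<ge> 0)" for d
    unfolding constr a_def ..
  have dualH: "inner d k' \<ge> 0" if "\<forall>j\<in>E. inner (a j) d \<ge> 0" "k' \<in> H" for d k'
  proof -
    have "H \<subseteq> {x. d \<bullet> x \<ge> 0}" unfolding H_def
      by (rule hull_minimal) (use that(1) convex_cone_halfspace_ge[of d] in \<open>auto simp: inner_commute\<close>)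
    then show ?thesis using that(2) by auto
  qed
  have dd_feas: "\<forall>j\<in>E. inner (a j) dd \<ge> 0"
    using sH aH dd_s by (auto simp: inner_commute[of "a _"])
  have expand: "(norm (d + c))^2 = (norm (d - dd))^2 + 2 * inner d k + (norm k)^2" for d
  proof -
    have e: "d + c = (d - dd) + k" using ddc by (simp add: algebra_simps)
    have "(norm ((d - dd) + k))^2 = (norm (d - dd))^2 + 2 * inner (d - dd) k + (norm k)^2"
      unfolding power2_norm_eq_inner inner_add_left inner_add_right inner_commute[of k "d - dd"] by simp
    then have "(norm (d + c))^2 = (norm (d - dd))^2 + 2 * inner (d - dd) k + (norm k)^2"
      by (simp only: e)
    then show ?thesis using ddk by (simp add: inner_diff_left)
  qed
  have part1: "(\<forall>j\<in>E. (Dmat A p0 *v (transpose A *v d))$j \<ge> 0)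
            \<and> (\<forall>d'. (\<forall>j\<in>E. (Dmat A p0 *v (transpose A *v d'))$j \<ge> 0) \<longrightarrow>
                   (norm (d + c))^2 \<le> (norm (d' + c))^2)
          \<longleftrightarrow> d = dd" for d
  proof
    assume h: "(\<forall>j\<in>E. (Dmat A p0 *v (transpose A *v d))$j \<ge> 0)
            \<and> (\<forall>d'. (\<forall>j\<in>E. (Dmat A p0 *v (transpose A *v d'))$j \<ge> 0) \<longrightarrow>
                   (norm (d + c))^2 \<le> (norm (d' + c))^2)"
    then have "(norm (d + c))^2 \<le> (norm (dd + c))^2" using dd_feas constrE by blast
    also have "\<dots> = (norm k)^2" using ddc by simp
    finally have "(norm (d - dd))^2 + 2 * inner d k \<le> 0" using expand[of d] by simp
    moreover have "inner d k \<ge> 0" using h constrE dualH kH by blast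
    ultimately have "(norm (d - dd))^2 \<le> 0" by linarith
    then show "d = dd" by simp
  next
    assume "d = dd"
    moreover have "(norm (dd + c))^2 \<le> (norm (d' + c))^2" if "\<forall>j\<in>E. inner (a j) d' \<ge> 0" for d'
    proof -
      have "inner d' k \<ge> 0" using dualH[OF that kH] .
      then show ?thesis using expand[of d'] ddc by simp
    qed
    ultimately show "(\<forall>j\<in>E. (Dmat A p0 *v (transpose A *v d))$j \<ge> 0)
            \<and> (\<forall>d'. (\<forall>j\<in>E. (Dmat A p0 *v (transpose A *v d'))$j \<ge> 0) \<longrightarrow>
                   (norm (d + c))^2 \<le> (norm (d' + c))^2)"
      using dd_feas constrE by blast
  qed
  have last: "(norm dd)^2 + inner c dd = 0"
  proof -
    have "(norm dd)^2 + inner c dd = inner (dd + c) dd"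
      by (simp add: power2_norm_eq_inner inner_add_left)
    also have "\<dots> = 0" using ddk ddc by (simp add: inner_commute)
    finally show ?thesis .
  qed
  have part2: "dd = (\<Sum>j\<in>E. (Dmat A p0 $ j $ j * u$j) *\<^sub>R column j A) - c
              \<and> (\<forall>j. u$j * (Dmat A p0 *v (transpose A *v dd))$j = 0)"
    if u1: "\<forall>j\<in>E. u$j \<ge> 0" and u2: "\<forall>j. j \<notin> E \<longrightarrow> u$j = 0"
      and umin: "\<forall>v. (\<forall>j\<in>E. v$j \<ge> 0) \<and> (\<forall>j. j \<notin> E \<longrightarrow> v$j = 0) \<longrightarrow>
                 (norm (A *v (Dmat A p0 *v u) - c))^2 \<le> (norm (A *v (Dmat A p0 *v v) - c))^2" for u
  proof -
    define w where "w = A *v (Dmat A p0 *v u)"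
    have w_eq: "w = (\<Sum>j\<in>E. (Dmat A p0 $ j $ j * u$j) *\<^sub>R column j A)"
      unfolding w_def by (rule I3[OF u2])
    have w_sum: "w = (\<Sum>j\<in>E. u$j *\<^sub>R a j)" unfolding w_eq I3' a_def ..
    have wH: "w \<in> H" unfolding KU_H[symmetric] KU_def w_sum using u1 by blast
    obtain u' where k_sum: "k = (\<Sum>j\<in>E. u' j *\<^sub>R a j)" and u'1: "\<forall>j\<in>E. u' j \<ge> 0"
      using kH unfolding KU_H[symmetric] KU_def by blast
    define v where "v = (\<chi> j. if j \<in> E then u' j else 0)"
    have v2: "\<forall>j. j \<notin> E \<longrightarrow> v$j = 0" unfolding v_def by simp
    have v1: "\<forall>j\<in>E. v$j \<ge> 0" unfolding v_def using u'1 by simp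
    have "A *v (Dmat A p0 *v v) = (\<Sum>j\<in>E. v$j *\<^sub>R a j)"
      unfolding I3[OF v2] I3' a_def ..
    also have "\<dots> = k" unfolding k_sum v_def by (intro sum.cong) auto
    finally have Avk: "A *v (Dmat A p0 *v v) = k" .
    have "(norm (w - c))^2 \<le> (norm (k - c))^2" 
      using umin[rule_format, OF conjI[OF v1 v2]] unfolding w_def Avk .
    also have "\<dots> = (norm s)^2" unfolding sk by (simp add: norm_minus_commute)
    finally have le: "(norm (w - c))^2 \<le> (norm s)^2" .
    have e: "w - c = (w - k) - s" unfolding sk by simp
    have "(norm ((w - k) - s))^2 = (norm (w - k))^2 - 2 * inner s (w - k) + (norm s)^2"
      using dot_norm_neg[of s "w - k"] by (simp add: norm_minus_commute)
    then have eq1: "(norm (w - c))^2 = (norm (w - k))^2 - 2 * inner s (w - k) + (norm s)^2"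
      by (simp only: e)
    have "inner s (w - k) = inner s w" using sk0 by (simp add: inner_diff_right)
    with eq1 le have "(norm (w - k))^2 - 2 * inner s w \<le> 0" by linarith
    moreover have "inner s w \<le> 0" using sH[OF wH] .
    ultimately have "(norm (w - k))^2 \<le> 0" by linarith
    then have wk: "w = k" by simp
    have "dd = k - c" using ddc by (simp add: eq_diff_eq)
    then have d1: "dd = (\<Sum>j\<in>E. (Dmat A p0 $ j $ j * u$j) *\<^sub>R column j A) - c"
      by (simp only: wk[symmetric] w_eq)
    have nonneg: "\<forall>j\<in>E. u$j * inner (a j) dd \<ge> 0"
      using u1 dd_feas by (intro ballI mult_nonneg_nonneg) auto
    have "(\<Sum>j\<in>E. u$j * inner (a j) dd) = inner w dd"
      unfolding w_sum inner_sum_left inner_scaleR_left ..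
    also have "\<dots> = 0" by (simp only: wk inner_commute[of k dd] ddk)
    finally have sumeq: "(\<Sum>j\<in>E. u$j * inner (a j) dd) = 0" .
    have "\<forall>j\<in>E. u$j * inner (a j) dd = 0"
      using iffD1[OF sum_nonneg_eq_0_iff[OF finE, of "\<lambda>j. u$j * inner (a j) dd"] sumeq] nonneg by blast
    then have "\<forall>j. u$j * (Dmat A p0 *v (transpose A *v dd))$j = 0"
    proof (intro allI)
      fix j assume h: "\<forall>j\<in>E. u$j * inner (a j) dd = 0"
      show "u$j * (Dmat A p0 *v (transpose A *v dd))$j = 0"
      proof (cases "j \<in> E")
        case True then show ?thesis using h unfolding constr a_def by blast
      next
        case False then show ?thesis using u2 by simp
      qed
    qed
    with d1 show ?thesis by blast
  qed
  show ?thesis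
    unfolding E_def[symmetric] c_def[symmetric] dd_def[symmetric]
  proof (rule conjI)
    show "\<forall>d. ((\<forall>j\<in>E. (Dmat A p0 *v (transpose A *v d))$j \<ge> 0)
            \<and> (\<forall>d'. (\<forall>j\<in>E. (Dmat A p0 *v (transpose A *v d'))$j \<ge> 0) \<longrightarrow>
                   (norm (d + c))^2 \<le> (norm (d' + c))^2))
          \<longleftrightarrow> d = dd" using part1 by blast
  next
    show "\<forall>u. ((\<forall>j\<in>E. u$j \<ge> 0) \<and> (\<forall>j. j \<notin> E \<longrightarrow> u$j = 0)
             \<and> (\<forall>v. (\<forall>j\<in>E. v$j \<ge> 0) \<and> (\<forall>j. j \<notin> E \<longrightarrow> v$j = 0) \<longrightarrow>
                 (norm (A *v (Dmat A p0 *v u) - c))^2 \<le> (norm (A *v (Dmat A p0 *v v) - c))^2))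
          \<longrightarrow> dd = (\<Sum>j\<in>E. (Dmat A p0 $ j $ j * u$j) *\<^sub>R column j A) - c
              \<and> (\<forall>j. u$j * (Dmat A p0 *v (transpose A *v dd))$j = 0)
              \<and> (norm dd)^2 + inner c dd = 0"
    proof (intro allI impI)
      fix u assume h: "(\<forall>j\<in>E. u$j \<ge> 0) \<and> (\<forall>j. j \<notin> E \<longrightarrow> u$j = 0)
             \<and> (\<forall>v. (\<forall>j\<in>E. v$j \<ge> 0) \<and> (\<forall>j. j \<notin> E \<longrightarrow> v$j = 0) \<longrightarrow>
                 (norm (A *v (Dmat A p0 *v u) - c))^2 \<le> (norm (A *v (Dmat A p0 *v v) - c))^2)"
      have p2: "dd = (\<Sum>j\<in>E. (Dmat A p0 $ j $ j * u$j) *\<^sub>R column j A) - c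
              \<and> (\<forall>j. u$j * (Dmat A p0 *v (transpose A *v dd))$j = 0)"
        using h by (intro part2) auto
      show "dd = (\<Sum>j\<in>E. (Dmat A p0 $ j $ j * u$j) *\<^sub>R column j A) - c
              \<and> (\<forall>j. u$j * (Dmat A p0 *v (transpose A *v dd))$j = 0)
              \<and> (norm dd)^2 + inner c dd = 0" by (rule conjI[OF conjunct1[OF p2] conjI[OF conjunct2[OF p2] last]])
    qed
  qed
qed

end
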